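(* Let $W$ be a set of $n$ workers and $F$ a set of $n$ firms ($n\ge 2$), where each worker $w$ has a strict complete preference order $\succ_w$ over $F$ and each firm $f$ has a strict complete preference order $\succ_f$ over $W$; call this instance $P$. Let $P^*$ be the normal form of $P$ (defined in the context), with normal-form lists $L^*_w\subseteq F$ for each worker and $L^*_f\subseteq W$ for each firm. Then the following three statements are equivalent: (a) $P$ has a unique stable matching. (b) $P^*$ is acyclic, i.e. there do not exist an integer $k$ with $2\le k\le n$, distinct workers $w_1,\dots,w_k$ and distinct firms $f_1,\dots,f_k$ such that, for all $j=1,\dots,k$ (indices modulo $k$), $f_j,f_{j+1}\in L^*_{w_j}$ with $f_{j+1}\succ_{w_j} f_j$, and $w_j,w_{j-1}\in L^*_{f_j}$ with $w_j\succ_{f_j} w_{j-1}$. (c) In $P^*$ every worker's list $L^*_w$ and every firm's list $L^*_f$ consists of exactly one element.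
   Context: A matching is a bijection $\mu$ pairing each worker with exactly one firm and each firm with exactly one worker. A worker $w$ and firm $f$ form a blocking pair for $\mu$ if $f\succ_w \mu(w)$ and $w\succ_f\mu(f)$; $\mu$ is stable if it has no blocking pair. Iterated deletion of unattractive alternatives (IDUA) and the normal form: start with lists $L^0_w=F$ for every worker $w$ and $L^0_f=W$ for every firm $f$ (so $f\in L^0_w$ iff $w\in L^0_f$), each list ordered by the participant's original preference. Given lists $L^{k-1}$ (with $f\in L^{k-1}_w$ iff $w\in L^{k-1}_f$), for a worker $w$ and a firm $f\in L^{k-1}_w$ say the pair $(w,f)$ is mutually unattractive at round $k$ if either (i) there is $f'\in L^{k-1}_w$ with $f'\succ_w f$ such that $w$ is the $\succ_{f'}$-most preferred element of $L^{k-1}_{f'}$, or (ii) there is $w'\in L^{k-1}_f$ with $w'\succ_f w$ such that $f$ is the $\succ_{w'}$-most preferred element of $L^{k-1}_{w'}$. Define $L^k_w$ (resp. $L^k_f$) by removing from $L^{k-1}_w$ every $f$ (resp. from $L^{k-1}_f$ every $w$) such that $(w,f)$ is mutually unattractive at round $k$. The normal form $P^*$ is the collection of lists $L^{k^*}$ where $k^*$ is the least $k$ with $L^{k+1}=L^k$; its lists are denoted $L^*_w$, $L^*_f$, each ordered by the original preferences. *)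

theory Defs
  imports Main
begin

text \<open>A preference relation r on a set A is given as r x y meaning "x is strictly preferred to y".
  It must be a strict complete (total) order on A.\<close>
definition strict_order_on :: "'a set \<Rightarrow> ('a \<Rightarrow> 'a \<Rightarrow> bool) \<Rightarrow> bool" where
  "strict_order_on A r \<longleftrightarrow>
     (\<forall>x\<in>A. \<not> r x x) \<and>
     (\<forall>x\<in>A. \<forall>y\<in>A. \<forall>z\<in>A. r x y \<longrightarrow> r y z \<longrightarrow> r x z) \<and>
     (\<forall>x\<in>A. \<forall>y\<in>A. x \<noteq> y \<longrightarrow> r x y \<or> r y x)"

text \<open>A matching: bijection mu from workers W onto firms F.  Firm f's partner is the worker w'
  with mu w' = f.\<close>
definition is_matching :: "'w set \<Rightarrow> 'f set \<Rightarrow> ('w \<Rightarrow> 'f) \<Rightarrow> bool" where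
  "is_matching W F mu \<longleftrightarrow> bij_betw mu W F"

definition blocking_pair ::
  "'w set \<Rightarrow> 'f set \<Rightarrow> ('w \<Rightarrow> 'f \<Rightarrow> 'f \<Rightarrow> bool) \<Rightarrow> ('f \<Rightarrow> 'w \<Rightarrow> 'w \<Rightarrow> bool)
   \<Rightarrow> ('w \<Rightarrow> 'f) \<Rightarrow> 'w \<Rightarrow> 'f \<Rightarrow> bool" where
  "blocking_pair W F pw pf mu w f \<longleftrightarrow>
     w \<in> W \<and> f \<in> F \<and> pw w f (mu w) \<and>
     (\<exists>w'\<in>W. mu w' = f \<and> pf f w w')"

definition stable_matching ::
  "'w set \<Rightarrow> 'f set \<Rightarrow> ('w \<Rightarrow> 'f \<Rightarrow> 'f \<Rightarrow> bool) \<Rightarrow> ('f \<Rightarrow> 'w \<Rightarrow> 'w \<Rightarrow> bool)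
   \<Rightarrow> ('w \<Rightarrow> 'f) \<Rightarrow> bool" where
  "stable_matching W F pw pf mu \<longleftrightarrow>
     is_matching W F mu \<and> (\<forall>w\<in>W. \<forall>f\<in>F. \<not> blocking_pair W F pw pf mu w f)"

text \<open>Unique stable matching: one exists and any two agree on W (matchings are only
  meaningful on W).\<close>
definition unique_stable_matching ::
  "'w set \<Rightarrow> 'f set \<Rightarrow> ('w \<Rightarrow> 'f \<Rightarrow> 'f \<Rightarrow> bool) \<Rightarrow> ('f \<Rightarrow> 'w \<Rightarrow> 'w \<Rightarrow> bool) \<Rightarrow> bool" where
  "unique_stable_matching W F pw pf \<longleftrightarrow>
     (\<exists>mu. stable_matching W F pw pf mu \<and>
        (\<forall>mu'. stable_matching W F pw pf mu' \<longrightarrow> (\<forall>w\<in>W. mu' w = mu w)))"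

text \<open>The lists L^k are represented jointly by the set of pairs (w,f) with f \<in> L^k_w
  (equivalently w \<in> L^k_f; the symmetry invariant is built in).\<close>
definition mutually_unattractive ::
  "('w \<Rightarrow> 'f \<Rightarrow> 'f \<Rightarrow> bool) \<Rightarrow> ('f \<Rightarrow> 'w \<Rightarrow> 'w \<Rightarrow> bool) \<Rightarrow> ('w \<times> 'f) set \<Rightarrow> 'w \<Rightarrow> 'f \<Rightarrow> bool" where
  "mutually_unattractive pw pf L w f \<longleftrightarrow>
     (\<exists>f'. (w, f') \<in> L \<and> pw w f' f \<and>
            (\<forall>w''. (w'', f') \<in> L \<and> w'' \<noteq> w \<longrightarrow> pf f' w w'')) \<or>
     (\<exists>w'. (w', f) \<in> L \<and> pf f w' w \<and>
            (\<forall>f''. (w', f'') \<in> L \<and> f'' \<noteq> f \<longrightarrow> pw w' f f''))"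

fun idua_lists ::
  "'w set \<Rightarrow> 'f set \<Rightarrow> ('w \<Rightarrow> 'f \<Rightarrow> 'f \<Rightarrow> bool) \<Rightarrow> ('f \<Rightarrow> 'w \<Rightarrow> 'w \<Rightarrow> bool) \<Rightarrow> nat \<Rightarrow> ('w \<times> 'f) set" where
  "idua_lists W F pw pf 0 = W \<times> F"
| "idua_lists W F pw pf (Suc k) =
     {(w, f) \<in> idua_lists W F pw pf k.
        \<not> mutually_unattractive pw pf (idua_lists W F pw pf k) w f}"

definition normal_form ::
  "'w set \<Rightarrow> 'f set \<Rightarrow> ('w \<Rightarrow> 'f \<Rightarrow> 'f \<Rightarrow> bool) \<Rightarrow> ('f \<Rightarrow> 'w \<Rightarrow> 'w \<Rightarrow> bool) \<Rightarrow> ('w \<times> 'f) set" where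
  "normal_form W F pw pf =
     idua_lists W F pw pf
       (LEAST k. idua_lists W F pw pf (Suc k) = idua_lists W F pw pf k)"

definition nf_acyclic ::
  "'w set \<Rightarrow> 'f set \<Rightarrow> ('w \<Rightarrow> 'f \<Rightarrow> 'f \<Rightarrow> bool) \<Rightarrow> ('f \<Rightarrow> 'w \<Rightarrow> 'w \<Rightarrow> bool) \<Rightarrow> bool" where
  "nf_acyclic W F pw pf \<longleftrightarrow>
     (let L = normal_form W F pw pf in
      \<not> (\<exists>k::nat. \<exists>ws :: nat \<Rightarrow> 'w. \<exists>fs :: nat \<Rightarrow> 'f.
           2 \<le> k \<and> k \<le> card W \<and>
           inj_on ws {0..<k} \<and> inj_on fs {0..<k} \<and>
           ws ` {0..<k} \<subseteq> W \<and> fs ` {0..<k} \<subseteq> F \<and>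
           (\<forall>j<k.
              (ws j, fs j) \<in> L \<and> (ws j, fs ((j + 1) mod k)) \<in> L \<and>
              pw (ws j) (fs ((j + 1) mod k)) (fs j) \<and>
              (ws ((j + k - 1) mod k), fs j) \<in> L \<and>
              pf (fs j) (ws j) (ws ((j + k - 1) mod k)))))"

end

theory Submission
  imports Defs
begin


lemma so_irrefl: "strict_order_on A r \<Longrightarrow> x \<in> A \<Longrightarrow> \<not> r x x"
  unfolding strict_order_on_def by blast

lemma so_trans: "strict_order_on A r \<Longrightarrow> x \<in> A \<Longrightarrow> y \<in> A \<Longrightarrow> z \<in> A \<Longrightarrow> r x y \<Longrightarrow> r y z \<Longrightarrow> r x z"
  unfolding strict_order_on_def by blast

lemma so_total: "strict_order_on A r \<Longrightarrow> x \<in> A \<Longrightarrow> y \<in> A \<Longrightarrow> x \<noteq> y \<Longrightarrow> r x y \<or> r y x"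
  unfolding strict_order_on_def by blast

lemma so_asym: "strict_order_on A r \<Longrightarrow> x \<in> A \<Longrightarrow> y \<in> A \<Longrightarrow> r x y \<Longrightarrow> \<not> r y x"
  unfolding strict_order_on_def by blast

lemma so_max:
  assumes so: "strict_order_on X r" and fin: "finite A" and ne: "A \<noteq> {}" and sub: "A \<subseteq> X"
  shows "\<exists>x\<in>A. \<forall>y\<in>A. y \<noteq> x \<longrightarrow> r x y"
  using fin ne sub
proof (induction A rule: finite_ne_induct)
  case (singleton x) then show ?case by auto
next
  case (insert a A)
  then obtain x where x: "x \<in> A" "\<forall>y\<in>A. y \<noteq> x \<longrightarrow> r x y" by auto
  have aX: "a \<in> X" and xX: "x \<in> X" and AX: "A \<subseteq> X" using insert x by auto
  have ax: "a \<noteq> x" using insert x by auto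
  show ?case
  proof (cases "r a x")
    case True
    have "\<forall>y\<in>insert a A. y \<noteq> a \<longrightarrow> r a y"
    proof (intro ballI impI)
      fix y assume "y \<in> insert a A" "y \<noteq> a"
      then have yA: "y \<in> A" by auto
      show "r a y"
      proof (cases "y = x")
        case True then show ?thesis using \<open>r a x\<close> by simp
      next
        case False then have "r x y" using x yA by auto
        then show ?thesis using so_trans[OF so aX xX _ \<open>r a x\<close>] yA AX by blast
      qed
    qed
    then show ?thesis by blast
  next
    case False
    then have "r x a" using so_total[OF so aX xX ax] by blast
    then show ?thesis using x by auto
  qed
qed

lemma idua_subset: "idua_lists W F pw pf k \<subseteq> W \<times> F"
  by (induction k) auto

lemma idua_Suc_sub: "idua_lists W F pw pf (Suc k) \<subseteq> idua_lists W F pw pf k"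
  by auto

lemma idua_fix_ex:
  assumes "finite W" "finite F"
  shows "\<exists>k. idua_lists W F pw pf (Suc k) = idua_lists W F pw pf k"
proof (rule ccontr)
  assume ne: "\<not> ?thesis"
  let ?N = "card (W \<times> F)"
  have fin: "finite (idua_lists W F pw pf k)" for k
    using idua_subset[of W F pw pf k] assms finite_subset by blast
  have "card (idua_lists W F pw pf k) + k \<le> ?N" for k
  proof (induction k)
    case 0 show ?case by simp
  next
    case (Suc k)
    have "idua_lists W F pw pf (Suc k) \<subset> idua_lists W F pw pf k" using ne idua_Suc_sub by blast
    then have "card (idua_lists W F pw pf (Suc k)) < card (idua_lists W F pw pf k)"
      using fin psubset_card_mono by blast
    with Suc show ?case by simp
  qed
  from this[of "Suc ?N"] show False by simp
qed

lemma nf_K: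
  assumes "finite W" "finite F"
  obtains K where "normal_form W F pw pf = idua_lists W F pw pf K"
    "idua_lists W F pw pf (Suc K) = idua_lists W F pw pf K"
proof -
  define K where "K = (LEAST k. idua_lists W F pw pf (Suc k) = idua_lists W F pw pf k)"
  have "idua_lists W F pw pf (Suc K) = idua_lists W F pw pf K"
    unfolding K_def by (rule LeastI_ex) (rule idua_fix_ex[OF assms])
  moreover have "normal_form W F pw pf = idua_lists W F pw pf K"
    unfolding K_def normal_form_def ..
  ultimately show ?thesis using that by blast
qed

lemma nf_subset: "normal_form W F pw pf \<subseteq> W \<times> F"
  unfolding normal_form_def by (rule idua_subset)

lemma nf_no_mu:
  assumes "finite W" "finite F" "(w,f) \<in> normal_form W F pw pf"
  shows "\<not> mutually_unattractive pw pf (normal_form W F pw pf) w f"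
proof -
  obtain K where K: "normal_form W F pw pf = idua_lists W F pw pf K"
    "idua_lists W F pw pf (Suc K) = idua_lists W F pw pf K" using nf_K[OF assms(1,2)] by blast
  have "(w,f) \<in> idua_lists W F pw pf (Suc K)" using K assms(3) by simp
  then show ?thesis using K(1) by simp
qed

lemma idua_inv:
  assumes finW: "finite W" and finF: "finite F"
    and ow: "\<forall>w\<in>W. strict_order_on F (pw w)"
    and of: "\<forall>f\<in>F. strict_order_on W (pf f)"
  shows "w \<in> W \<Longrightarrow> f \<in> F \<Longrightarrow> (w,f) \<notin> idua_lists W F pw pf k \<Longrightarrow>
     mutually_unattractive pw pf (idua_lists W F pw pf k) w f"
proof (induction k arbitrary: w f)
  case 0 then show ?case by simp
next
  case (Suc k)
  define Lk where "Lk = idua_lists W F pw pf k"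
  define Lk1 where "Lk1 = idua_lists W F pw pf (Suc k)"
  have sub1: "Lk1 \<subseteq> Lk" unfolding Lk_def Lk1_def by (rule idua_Suc_sub)
  have subk: "Lk \<subseteq> W \<times> F" unfolding Lk_def by (rule idua_subset)
  have finLk: "finite Lk" using subk finW finF finite_subset by blast
  have Lk1_eq: "Lk1 = {(w, f) \<in> Lk. \<not> mutually_unattractive pw pf Lk w f}"
    unfolding Lk1_def Lk_def by simp
  have mu: "mutually_unattractive pw pf Lk w f"
  proof (cases "(w,f) \<in> Lk")
    case True then show ?thesis using Suc.prems(3) Lk1_eq Lk1_def by auto
  next
    case False then show ?thesis using Suc.IH[OF Suc.prems(1,2)] Lk_def by auto
  qed
  have w: "w \<in> W" and f: "f \<in> F" using Suc.prems by auto
  have ow': "strict_order_on F (pw w)" using ow w by blast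
  have of': "strict_order_on W (pf f)" using of f by blast
  show ?case unfolding Lk1_def[symmetric]
  proof -
    from mu consider
      (i) f' where "(w, f') \<in> Lk" "pw w f' f" "\<forall>w''. (w'', f') \<in> Lk \<and> w'' \<noteq> w \<longrightarrow> pf f' w w''"
    | (ii) w' where "(w', f) \<in> Lk" "pf f w' w" "\<forall>f''. (w', f'') \<in> Lk \<and> f'' \<noteq> f \<longrightarrow> pw w' f f''"
      unfolding mutually_unattractive_def by blast
    then show "mutually_unattractive pw pf Lk1 w f"
    proof cases
      case i
      define C where "C = {g. (w,g) \<in> Lk \<and> (\<forall>w''. (w'', g) \<in> Lk \<and> w'' \<noteq> w \<longrightarrow> pf g w w'')}"
      have CF: "C \<subseteq> F" using subk unfolding C_def by auto
      have "finite C" using CF finF finite_subset by blast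
      moreover have "f' \<in> C" using i unfolding C_def by blast
      ultimately obtain g where g: "g \<in> C" "\<forall>y\<in>C. y \<noteq> g \<longrightarrow> pw w g y"
        using so_max[OF ow', of C] CF by blast
      have gF: "g \<in> F" and f'F: "f' \<in> F" using g CF \<open>f' \<in> C\<close> by auto
      have og: "strict_order_on W (pf g)" using of gF by blast
      have gf: "pw w g f"
      proof (cases "g = f'")
        case True then show ?thesis using i by simp
      next
        case False then have "pw w g f'" using g(2) \<open>f' \<in> C\<close> by (metis False)
        then show ?thesis using so_trans[OF ow' gF f'F f] i by blast
      qed
      have nmu: "\<not> mutually_unattractive pw pf Lk w g"
      proof
        assume "mutually_unattractive pw pf Lk w g"
        then consider
          (a) f'' where "(w, f'') \<in> Lk" "pw w f'' g" "\<forall>w''. (w'', f'') \<in> Lk \<and> w'' \<noteq> w \<longrightarrow> pf f'' w w''"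
        | (b) w' where "(w', g) \<in> Lk" "pf g w' w" "\<forall>f''. (w', f'') \<in> Lk \<and> f'' \<noteq> g \<longrightarrow> pw w' g f''"
          unfolding mutually_unattractive_def by blast
        then show False
        proof cases
          case a
          then have "f'' \<in> C" unfolding C_def by blast
          moreover have "f'' \<in> F" using a subk by auto
          moreover have "f'' \<noteq> g" using a so_irrefl[OF ow' gF] by auto
          ultimately have "pw w g f''" using g by blast
          then show False using so_asym[OF ow' gF \<open>f'' \<in> F\<close>] a by blast
        next
          case b
          have w'W: "w' \<in> W" using b subk by auto
          have "w' \<noteq> w" using b so_irrefl[OF og w] by auto
          then have "pf g w w'" using g(1) b unfolding C_def by blast
          then show False using so_asym[OF og w w'W] b by blast
        qed
      qed
      have "(w, g) \<in> Lk1" using nmu g(1) Lk1_eq unfolding C_def by blast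
      moreover have "\<forall>w''. (w'', g) \<in> Lk1 \<and> w'' \<noteq> w \<longrightarrow> pf g w w''"
        using g(1) sub1 unfolding C_def by blast
      ultimately show ?thesis unfolding mutually_unattractive_def using gf by blast
    next
      case ii
      define C where "C = {v. (v,f) \<in> Lk \<and> (\<forall>f''. (v, f'') \<in> Lk \<and> f'' \<noteq> f \<longrightarrow> pw v f f'')}"
      have CW: "C \<subseteq> W" using subk unfolding C_def by auto
      have "finite C" using CW finW finite_subset by blast
      moreover have "w' \<in> C" using ii unfolding C_def by blast
      ultimately obtain v where v: "v \<in> C" "\<forall>y\<in>C. y \<noteq> v \<longrightarrow> pf f v y"
        using so_max[OF of', of C] CW by blast
      have vW: "v \<in> W" and w'W: "w' \<in> W" using v CW \<open>w' \<in> C\<close> by auto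
      have ov: "strict_order_on F (pw v)" using ow vW by blast
      have vw: "pf f v w"
      proof (cases "v = w'")
        case True then show ?thesis using ii by simp
      next
        case False then have "pf f v w'" using v(2) \<open>w' \<in> C\<close> by (metis False)
        then show ?thesis using so_trans[OF of' vW w'W w] ii by blast
      qed
      have nmu: "\<not> mutually_unattractive pw pf Lk v f"
      proof
        assume "mutually_unattractive pw pf Lk v f"
        then consider
          (a) f'' where "(v, f'') \<in> Lk" "pw v f'' f" "\<forall>w''. (w'', f'') \<in> Lk \<and> w'' \<noteq> v \<longrightarrow> pf f'' v w''"
        | (b) w'' where "(w'', f) \<in> Lk" "pf f w'' v" "\<forall>f''. (w'', f'') \<in> Lk \<and> f'' \<noteq> f \<longrightarrow> pw w'' f f''"
          unfolding mutually_unattractive_def by blast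
        then show False
        proof cases
          case b
          then have "w'' \<in> C" unfolding C_def by blast
          moreover have "w'' \<in> W" using b subk by auto
          moreover have "w'' \<noteq> v" using b so_irrefl[OF of' vW] by auto
          ultimately have "pf f v w''" using v by blast
          then show False using so_asym[OF of' vW \<open>w'' \<in> W\<close>] b by blast
        next
          case a
          have fF: "f'' \<in> F" using a subk by auto
          have "f'' \<noteq> f" using a so_irrefl[OF ov f] by auto
          then have "pw v f f''" using v(1) a unfolding C_def by blast
          then show False using so_asym[OF ov f fF] a by blast
        qed
      qed
      have "(v, f) \<in> Lk1" using nmu v(1) Lk1_eq unfolding C_def by blast
      moreover have "\<forall>f''. (v, f'') \<in> Lk1 \<and> f'' \<noteq> f \<longrightarrow> pw v f f''"
        using v(1) sub1 unfolding C_def by blast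
      ultimately show ?thesis unfolding mutually_unattractive_def using vw by blast
    qed
  qed
qed




lemma nf_mu:
  assumes "finite W" "finite F" "\<forall>w\<in>W. strict_order_on F (pw w)" "\<forall>f\<in>F. strict_order_on W (pf f)"
    "w \<in> W" "f \<in> F" "(w,f) \<notin> normal_form W F pw pf"
  shows "mutually_unattractive pw pf (normal_form W F pw pf) w f"
  using idua_inv[OF assms(1-4) assms(5,6)] assms(7) unfolding normal_form_def by blast

lemma nf_nonempty:
  assumes finW: "finite W" and finF: "finite F" and cWF: "card W = card F"
    and ow: "\<forall>w\<in>W. strict_order_on F (pw w)" and of: "\<forall>f\<in>F. strict_order_on W (pf f)"
    and w: "w \<in> W"
  shows "\<exists>f. (w,f) \<in> normal_form W F pw pf"
proof (rule ccontr)
  define L where "L = normal_form W F pw pf"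
  have LWF: "L \<subseteq> W \<times> F" unfolding L_def by (rule nf_subset)
  assume "\<not> ?thesis"
  then have none: "\<And>f. (w,f) \<notin> L" unfolding L_def by auto
  have "\<forall>f\<in>F. \<exists>w'. (w',f) \<in> L \<and> (\<forall>f''. (w',f'')\<in>L \<and> f''\<noteq>f \<longrightarrow> pw w' f f'')"
  proof
    fix f assume "f \<in> F"
    then have "mutually_unattractive pw pf L w f"
      using nf_mu[OF finW finF ow of w] none unfolding L_def by blast
    then show "\<exists>w'. (w',f) \<in> L \<and> (\<forall>f''. (w',f'')\<in>L \<and> f''\<noteq>f \<longrightarrow> pw w' f f'')"
      using none unfolding mutually_unattractive_def by blast
  qed
  then obtain g where g: "\<forall>f\<in>F. (g f, f) \<in> L \<and> (\<forall>f''. (g f, f'')\<in>L \<and> f''\<noteq>f \<longrightarrow> pw (g f) f f'')"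
    by metis
  have inj: "inj_on g F"
  proof (rule inj_onI)
    fix f1 f2 assume f1: "f1\<in>F" and f2: "f2\<in>F" and e: "g f1 = g f2"
    show "f1 = f2"
    proof (rule ccontr)
      assume ne: "f1 \<noteq> f2"
      have gW: "g f1 \<in> W" using g f1 LWF by blast
      have "(g f1, f2) \<in> L" using g f2 e by metis
      then have p1: "pw (g f1) f1 f2" using g f1 ne by blast
      have "(g f1, f1) \<in> L" using g f1 by blast
      then have p2: "pw (g f1) f2 f1" using g f2 ne e by metis
      show False using so_asym[of F "pw (g f1)" f1 f2] ow gW f1 f2 p1 p2 by blast
    qed
  qed
  have "g ` F \<subseteq> W - {w}" using g none LWF by fastforce
  then have "card F \<le> card (W - {w})" using card_inj_on_le[OF inj] finW by blast
  moreover have "card (W - {w}) < card W" using card_Diff1_less[OF finW w] .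
  ultimately show False using cWF by simp
qed

lemma stable_in_idua:
  assumes ow: "\<forall>w\<in>W. strict_order_on F (pw w)" and of: "\<forall>f\<in>F. strict_order_on W (pf f)"
    and st: "stable_matching W F pw pf mu"
  shows "w \<in> W \<Longrightarrow> (w, mu w) \<in> idua_lists W F pw pf k"
proof (induction k arbitrary: w)
  have bij: "bij_betw mu W F" using st unfolding stable_matching_def is_matching_def by blast
  have nob: "\<And>w f. w\<in>W \<Longrightarrow> f\<in>F \<Longrightarrow> \<not> blocking_pair W F pw pf mu w f"
    using st unfolding stable_matching_def by blast
  {
    case 0 then show ?case using bij bij_betw_apply by fastforce
  next
    case (Suc k)
    define Lk where "Lk = idua_lists W F pw pf k"
    have subk: "Lk \<subseteq> W \<times> F" unfolding Lk_def by (rule idua_subset)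
    have IH: "\<And>v. v \<in> W \<Longrightarrow> (v, mu v) \<in> Lk" using Suc.IH Lk_def by blast
    have w: "w \<in> W" by fact
    have mwF: "mu w \<in> F" using bij w bij_betw_apply by fastforce
    have "\<not> mutually_unattractive pw pf Lk w (mu w)"
    proof
      assume "mutually_unattractive pw pf Lk w (mu w)"
      then consider
        (a) f' where "(w, f') \<in> Lk" "pw w f' (mu w)" "\<forall>w''. (w'', f') \<in> Lk \<and> w'' \<noteq> w \<longrightarrow> pf f' w w''"
      | (b) w' where "(w', mu w) \<in> Lk" "pf (mu w) w' w" "\<forall>f''. (w', f'') \<in> Lk \<and> f'' \<noteq> mu w \<longrightarrow> pw w' (mu w) f''"
        unfolding mutually_unattractive_def by blast
      then show False
      proof cases
        case a
        have f'F: "f' \<in> F" using a subk by auto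
        then obtain w' where w': "w' \<in> W" "mu w' = f'" using bij unfolding bij_betw_def by auto
        have "w' \<noteq> w" using a w' so_irrefl[of F "pw w" f'] ow w f'F by auto
        then have "pf f' w w'" using a IH[OF w'(1)] w' by auto
        then have "blocking_pair W F pw pf mu w f'" unfolding blocking_pair_def using w f'F a w' by blast
        then show False using nob w f'F by blast
      next
        case b
        have w'W: "w' \<in> W" using b subk by auto
        have "w' \<noteq> w" using b so_irrefl[of W "pf (mu w)" w] of w mwF by auto
        then have "mu w' \<noteq> mu w" using bij w w'W unfolding bij_betw_def inj_on_def by blast
        then have "pw w' (mu w) (mu w')" using b IH[OF w'W] by blast
        then have "blocking_pair W F pw pf mu w' (mu w)" unfolding blocking_pair_def using w w'W mwF b by blast
        then show False using nob w'W mwF by blast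
      qed
    qed
    then show ?case using IH[OF w] Lk_def by simp
  }
qed

lemma stable_in_nf:
  assumes "\<forall>w\<in>W. strict_order_on F (pw w)" "\<forall>f\<in>F. strict_order_on W (pf f)"
    "stable_matching W F pw pf mu" "w \<in> W"
  shows "(w, mu w) \<in> normal_form W F pw pf"
  unfolding normal_form_def using stable_in_idua[OF assms] .

lemma worker_side:
  assumes finW: "finite W" and finF: "finite F" and cWF: "card W = card F"
    and ow: "\<forall>w\<in>W. strict_order_on F (pw w)" and of: "\<forall>f\<in>F. strict_order_on W (pf f)"
  shows "\<exists>T. stable_matching W F pw pf T \<and> (\<forall>w\<in>W. (w, T w) \<in> normal_form W F pw pf \<and>
            (\<forall>f. (w,f) \<in> normal_form W F pw pf \<and> f \<noteq> T w \<longrightarrow> pw w (T w) f))"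
proof -
  define L where "L = normal_form W F pw pf"
  have LWF: "L \<subseteq> W \<times> F" unfolding L_def by (rule nf_subset)
  have G2: "\<And>w f. (w,f) \<in> L \<Longrightarrow> \<not> mutually_unattractive pw pf L w f"
    unfolding L_def using nf_no_mu[OF finW finF] by blast
  have G3: "\<And>w f. w \<in> W \<Longrightarrow> f \<in> F \<Longrightarrow> (w,f) \<notin> L \<Longrightarrow> mutually_unattractive pw pf L w f"
    unfolding L_def using nf_mu[OF finW finF ow of] by blast
  have ex: "\<forall>w\<in>W. \<exists>f. (w,f)\<in>L \<and> (\<forall>f2. (w,f2)\<in>L \<and> f2\<noteq>f \<longrightarrow> pw w f f2)"
  proof
    fix w assume w: "w\<in>W"
    let ?A = "{f. (w,f)\<in>L}"
    have AF: "?A \<subseteq> F" using LWF by auto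
    have "finite ?A" using AF finF finite_subset by blast
    moreover have "?A \<noteq> {}" using nf_nonempty[OF finW finF cWF ow of w] L_def by auto
    ultimately obtain x where "x \<in> ?A" "\<forall>y\<in>?A. y \<noteq> x \<longrightarrow> pw w x y"
      using so_max[of F "pw w" ?A] ow w AF by blast
    then show "\<exists>f. (w,f)\<in>L \<and> (\<forall>f2. (w,f2)\<in>L \<and> f2\<noteq>f \<longrightarrow> pw w f f2)" by blast
  qed
  then obtain T where T: "\<forall>w\<in>W. (w, T w)\<in>L \<and> (\<forall>f2. (w,f2)\<in>L \<and> f2 \<noteq> T w \<longrightarrow> pw w (T w) f2)"
    by metis
  have TF: "T ` W \<subseteq> F" using T LWF by blast
  have inj: "inj_on T W"
  proof (rule inj_onI)
    fix w1 w2 assume w1: "w1 \<in> W" and w2: "w2 \<in> W" and e: "T w1 = T w2"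
    show "w1 = w2"
    proof (rule ccontr)
      assume ne: "w1 \<noteq> w2"
      define f where "f = T w1"
      have fF: "f \<in> F" using TF w1 f_def by blast
      have in1: "(w1,f) \<in> L" and in2: "(w2,f) \<in> L" using T w1 w2 e f_def by auto
      have top1: "\<forall>f''. (w1,f'')\<in>L \<and> f''\<noteq>f \<longrightarrow> pw w1 f f''" using T w1 f_def by auto
      have top2: "\<forall>f''. (w2,f'')\<in>L \<and> f''\<noteq>f \<longrightarrow> pw w2 f f''" using T w2 f_def e by auto
      have "\<not> pf f w1 w2"
      proof
        assume "pf f w1 w2"
        then have "mutually_unattractive pw pf L w2 f"
          unfolding mutually_unattractive_def using in1 top1 by blast
        then show False using G2 in2 by blast
      qed
      moreover have "\<not> pf f w2 w1"
      proof
        assume "pf f w2 w1"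
        then have "mutually_unattractive pw pf L w1 f"
          unfolding mutually_unattractive_def using in2 top2 by blast
        then show False using G2 in1 by blast
      qed
      ultimately show False using so_total[of W "pf f" w1 w2] of fF w1 w2 ne by blast
    qed
  qed
  have "T ` W = F"
    using card_subset_eq[OF finF TF] card_image[OF inj] cWF by simp
  then have bij: "bij_betw T W F" using inj unfolding bij_betw_def by blast
  have "\<forall>w\<in>W. \<forall>f\<in>F. \<not> blocking_pair W F pw pf T w f"
  proof (intro ballI notI)
    fix w f assume w: "w \<in> W" and f: "f \<in> F" and bp: "blocking_pair W F pw pf T w f"
    from bp obtain w' where pr: "pw w f (T w)" and w': "w' \<in> W" "T w' = f" "pf f w w'"
      unfolding blocking_pair_def by blast
    have owr: "strict_order_on F (pw w)" using ow w by blast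
    have TwF: "T w \<in> F" using TF w by blast
    have "(w,f) \<notin> L"
    proof
      assume "(w,f) \<in> L"
      moreover have "f \<noteq> T w" using pr so_irrefl[OF owr TwF] by auto
      ultimately have "pw w (T w) f" using T w by blast
      then show False using so_asym[OF owr TwF f] pr by blast
    qed
    then have "mutually_unattractive pw pf L w f" using G3 w f by blast
    then consider
      (a) f' where "(w, f') \<in> L" "pw w f' f"
    | (b) w'' where "(w'', f) \<in> L" "pf f w'' w" "\<forall>f''. (w'', f'') \<in> L \<and> f'' \<noteq> f \<longrightarrow> pw w'' f f''"
      unfolding mutually_unattractive_def by blast
    then show False
    proof cases
      case a
      have f'F: "f' \<in> F" using a LWF by auto
      have "pw w (T w) f"
      proof (cases "f' = T w")
        case True then show ?thesis using a by simp
      next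
        case False
        then have "pw w (T w) f'" using T w a by blast
        then show ?thesis using so_trans[OF owr TwF f'F f] a by blast
      qed
      then show False using so_asym[OF owr TwF f] pr by blast
    next
      case b
      have w''W: "w'' \<in> W" using b LWF by auto
      have ow'': "strict_order_on F (pw w'')" using ow w''W by blast
      have "T w'' = f"
      proof (rule ccontr)
        assume ne: "T w'' \<noteq> f"
        have T''F: "T w'' \<in> F" using TF w''W by blast
        have "pw w'' (T w'') f" using T w''W b ne by metis
        moreover have "pw w'' f (T w'')" using b T w''W ne by metis
        ultimately show False using so_asym[OF ow'' T''F f] by blast
      qed
      then have "w'' = w'" using inj w' w''W unfolding inj_on_def by metis
      then show False using b w' so_asym[of W "pf f" w w'] of f w by blast
    qed
  qed
  then have "stable_matching W F pw pf T"
    unfolding stable_matching_def is_matching_def using bij by blast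
  then show ?thesis using T L_def by blast
qed

lemma swap_mem: "((a,b) \<in> prod.swap ` L) = ((b,a) \<in> L)"
  by force

lemma mu_swap: "mutually_unattractive pf pw (prod.swap ` L) f w = mutually_unattractive pw pf L w f"
  unfolding mutually_unattractive_def swap_mem by blast

lemma idua_swap: "idua_lists F W pf pw k = prod.swap ` idua_lists W F pw pf k"
proof (induction k)
  case 0 show ?case by (simp add: product_swap)
next
  case (Suc k)
  show ?case
    unfolding idua_lists.simps Suc mu_swap by (force simp: swap_mem mu_swap)
qed

lemma nf_swap: "normal_form F W pf pw = prod.swap ` normal_form W F pw pf"
proof -
  have e: "\<And>k. idua_lists F W pf pw k = prod.swap ` idua_lists W F pw pf k" by (rule idua_swap)

  show ?thesis unfolding normal_form_def e by (simp del: idua_lists.simps add: inj_image_eq_iff inj_on_def)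
qed




lemma cycle_exists:
  assumes finW: "finite W"
  and Tbij: "bij_betw T W F" and T'bij: "bij_betw T' F W"
  and w0: "w0 \<in> W" and nf0: "T' (T w0) \<noteq> w0"
  and Tp: "\<forall>w\<in>W. (w, T w) \<in> L \<and> (\<forall>f. (w,f) \<in> L \<and> f \<noteq> T w \<longrightarrow> pw w (T w) f)"
  and T'p: "\<forall>f\<in>F. (T' f, f) \<in> L \<and> (\<forall>w. (w,f) \<in> L \<and> w \<noteq> T' f \<longrightarrow> pf f (T' f) w)"
  shows "\<exists>k::nat. \<exists>ws. \<exists>fs. 2 \<le> k \<and> k \<le> card W \<and> inj_on ws {0..<k} \<and> inj_on fs {0..<k} \<and>
     ws ` {0..<k} \<subseteq> W \<and> fs ` {0..<k} \<subseteq> F \<and>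
     (\<forall>j<k. (ws j, fs j) \<in> L \<and> (ws j, fs ((j + 1) mod k)) \<in> L \<and>
        pw (ws j) (fs ((j + 1) mod k)) (fs j) \<and>
        (ws ((j + k - 1) mod k), fs j) \<in> L \<and>
        pf (fs j) (ws j) (ws ((j + k - 1) mod k)))"
proof -
  define s where "s = T' \<circ> T"
  have sbij: "bij_betw s W W" unfolding s_def using bij_betw_trans[OF Tbij T'bij] .
  have spow: "bij_betw (s ^^ i) W W" for i using bij_betw_funpow[OF sbij] .
  have sinj: "inj_on (s ^^ i) W" for i using spow[of i] unfolding bij_betw_def by blast
  have sinW: "(s^^i) w0 \<in> W" for i using spow[of i] w0 bij_betw_apply by fastforce
  have sw0: "s w0 \<noteq> w0" using nf0 s_def by simp
  have canc: "(s^^(j-i)) w0 = w0" if "i < j" "(s^^i) w0 = (s^^j) w0" for i j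
  proof -
    have "(s^^j) w0 = (s^^i) ((s^^(j-i)) w0)"
      using that(1) funpow_add[of i "j-i" s] by (simp add: o_def)
    then have "(s^^i) ((s^^(j-i)) w0) = (s^^i) w0" using that(2) by simp
    then show ?thesis using sinj[of i] sinW w0 unfolding inj_on_def by blast
  qed
  have ex: "\<exists>k. 0 < k \<and> k \<le> card W \<and> (s^^k) w0 = w0"
  proof -
    have "\<not> inj_on (\<lambda>i. (s^^i) w0) {0..card W}"
    proof
      assume "inj_on (\<lambda>i. (s^^i) w0) {0..card W}"
      then have "card {0..card W} \<le> card W" using card_inj_on_le[of _ _ W] sinW finW by blast
      then show False by simp
    qed
    then obtain i j where ij: "i \<le> card W" "j \<le> card W" "i \<noteq> j" "(s^^i) w0 = (s^^j) w0"
      unfolding inj_on_def by auto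
    show ?thesis
    proof (cases "i < j")
      case True then show ?thesis using canc[OF True ij(4)] ij by (intro exI[of _ "j - i"]) auto
    next
      case False then have "j < i" using ij by auto
      then show ?thesis using canc[OF \<open>j < i\<close> ij(4)[symmetric]] ij by (intro exI[of _ "i - j"]) auto
    qed
  qed
  define k where "k = (LEAST k. 0 < k \<and> (s^^k) w0 = w0)"
  have kp: "0 < k \<and> (s^^k) w0 = w0" unfolding k_def by (rule LeastI_ex) (use ex in blast)
  have kle: "k \<le> card W"
  proof -
    obtain k' where "0 < k'" "k' \<le> card W" "(s^^k') w0 = w0" using ex by blast
    then have "k \<le> k'" unfolding k_def by (intro Least_le) blast
    then show ?thesis using \<open>k' \<le> card W\<close> by simp
  qed
  have kmin: "(s^^d) w0 \<noteq> w0" if "0 < d" "d < k" for d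
    using not_less_Least[of d "\<lambda>k. 0 < k \<and> (s^^k) w0 = w0"] that unfolding k_def by blast
  have qk: "(s^^(q*k)) w0 = w0" for q
  proof (induction q)
    case 0 then show ?case by simp
  next
    case (Suc q)
    have "(s^^(Suc q * k)) w0 = (s^^k) ((s^^(q*k)) w0)" by (simp add: funpow_add)
    then show ?case using Suc kp by simp
  qed
  have per: "(s^^m) w0 = (s^^(m mod k)) w0" for m
  proof -
    have "m = m mod k + (m div k) * k" by simp
    then have "(s^^m) w0 = (s^^(m mod k)) ((s^^((m div k) * k)) w0)"
      by (metis comp_apply funpow_add)
    then show ?thesis using qk by simp
  qed
  have nofix: "s ((s^^j) w0) \<noteq> (s^^j) w0" for j
  proof
    assume "s ((s^^j) w0) = (s^^j) w0"
    then have "(s^^j) (s w0) = (s^^j) w0" by (simp add: funpow_swap1)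
    moreover have "s w0 \<in> W" using sbij w0 bij_betw_apply by fastforce
    ultimately show False using sinj[of j] w0 sw0 unfolding inj_on_def by blast
  qed
  have k2: "2 \<le> k"
  proof (rule ccontr)
    assume "\<not> 2 \<le> k"
    then have "k = 1" using kp by simp
    then show False using kp sw0 by simp
  qed
  define ws where "ws j = (s^^j) w0" for j
  define fs where "fs j = inv_into F T' (ws j)" for j
  have wsW: "ws j \<in> W" for j unfolding ws_def by (rule sinW)
  have T'surj: "T' ` F = W" using T'bij unfolding bij_betw_def by blast
  have T'inj: "inj_on T' F" using T'bij unfolding bij_betw_def by blast
  have Tinj: "inj_on T W" using Tbij unfolding bij_betw_def by blast
  have TF: "T w \<in> F" if "w \<in> W" for w using Tbij that bij_betw_apply by fastforce
  have fsF: "fs j \<in> F" for j unfolding fs_def using inv_into_into[of "ws j" T' F] wsW T'surj by blast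
  have T'fs: "T' (fs j) = ws j" for j unfolding fs_def using f_inv_into_f[of "ws j" T' F] wsW T'surj by blast
  have injws: "inj_on ws {0..<k}"
  proof (rule inj_onI)
    fix i j assume i: "i \<in> {0..<k}" and j: "j \<in> {0..<k}" and e: "ws i = ws j"
    show "i = j"
    proof (rule ccontr)
      assume "i \<noteq> j"
      then consider "i < j" | "j < i" by linarith
      then show False
      proof cases
        case 1
        have "j - i < k" "0 < j - i" using 1 j by auto
        then show False using canc[OF 1] e kmin[of "j - i"] unfolding ws_def by auto
      next
        case 2
        have "i - j < k" "0 < i - j" using 2 i by auto
        then show False using canc[OF 2] e kmin[of "i - j"] unfolding ws_def by auto
      qed
    qed
  qed
  have injfs: "inj_on fs {0..<k}"
  proof (rule inj_onI)
    fix i j assume "i \<in> {0..<k}" "j \<in> {0..<k}" "fs i = fs j"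
    then show "i = j" using T'fs injws unfolding inj_on_def by metis
  qed
  have main: "(ws j, fs j) \<in> L \<and> (ws j, fs ((j + 1) mod k)) \<in> L \<and>
        pw (ws j) (fs ((j + 1) mod k)) (fs j) \<and>
        (ws ((j + k - 1) mod k), fs j) \<in> L \<and>
        pf (fs j) (ws j) (ws ((j + k - 1) mod k))" if jk: "j < k" for j
  proof -
    let ?w = "ws j" and ?f = "fs j"
    have wW: "?w \<in> W" by (rule wsW)
    have a1: "(?w, ?f) \<in> L" using T'p fsF[of j] T'fs[of j] by metis
    have sw: "s ?w = ws (j+1)" unfolding ws_def by simp
    have "ws ((j+1) mod k) = ws (j+1)" unfolding ws_def using per[of "j+1"] by simp
    then have "fs ((j + 1) mod k) = inv_into F T' (T' (T ?w))" unfolding fs_def using sw s_def by simp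
    also have "\<dots> = T ?w" using T'inj TF[OF wW] by simp
    finally have nx: "fs ((j + 1) mod k) = T ?w" .
    have a2: "(?w, fs ((j + 1) mod k)) \<in> L" using nx Tp wW by simp
    have "?f \<noteq> T ?w"
    proof
      assume "?f = T ?w"
      then have "s ?w = ?w" using T'fs[of j] s_def by simp
      then show False using nofix[of j] unfolding ws_def by simp
    qed
    then have a3: "pw ?w (fs ((j + 1) mod k)) ?f" using nx Tp wW a1 by metis
    define p where "p = ws ((j + k - 1) mod k)"
    have pW: "p \<in> W" unfolding p_def by (rule wsW)
    have "p = (s^^(j + k - 1)) w0" unfolding p_def ws_def using per[of "j+k-1"] by simp
    then have "s p = (s^^(Suc (j + k - 1))) w0" by simp
    also have "Suc (j + k - 1) = j + k" using kp by simp
    finally have "s p = (s^^(j + k)) w0" .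
    also have "\<dots> = ?w" unfolding ws_def using per[of "j+k"] jk by simp
    finally have sp: "s p = ?w" .
    have "T' (T p) = T' ?f" using sp T'fs[of j] s_def by simp
    then have Tp_eq: "T p = ?f" using T'inj TF[OF pW] fsF[of j] unfolding inj_on_def by blast
    have a4: "(p, ?f) \<in> L" using Tp pW Tp_eq by metis
    have "p \<noteq> ?w"
    proof
      assume "p = ?w"
      then have "s ?w = ?w" using sp by simp
      then show False using nofix[of j] unfolding ws_def by simp
    qed
    then have a5: "pf ?f ?w p" using T'p fsF[of j] T'fs[of j] a4 by metis
    show ?thesis using a1 a2 a3 a4 a5 p_def by blast
  qed
  show ?thesis
    apply (rule exI[of _ k], rule exI[of _ ws], rule exI[of _ fs])
    using k2 kle injws injfs wsW fsF main by blast
qed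




theorem theorem1:
  fixes W :: "'w set" and F :: "'f set" and n :: nat
    and pw :: "'w \<Rightarrow> 'f \<Rightarrow> 'f \<Rightarrow> bool" and pf :: "'f \<Rightarrow> 'w \<Rightarrow> 'w \<Rightarrow> bool"
  assumes "finite W" and "finite F"
    and "card W = n" and "card F = n" and "n \<ge> 2"
    and "\<forall>w\<in>W. strict_order_on F (pw w)"
    and "\<forall>f\<in>F. strict_order_on W (pf f)"
  shows "(unique_stable_matching W F pw pf \<longleftrightarrow> nf_acyclic W F pw pf) \<and>
         (nf_acyclic W F pw pf \<longleftrightarrow>
            ((\<forall>w\<in>W. card {f. (w, f) \<in> normal_form W F pw pf} = 1) \<and>
             (\<forall>f\<in>F. card {w. (w, f) \<in> normal_form W F pw pf} = 1)))"
proof -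
  note finW = assms(1) and finF = assms(2) and ow = assms(6) and of = assms(7)
  define L where "L = normal_form W F pw pf"
  have cardWF: "card W = card F" using assms by simp
  obtain T where Tst: "stable_matching W F pw pf T"
    and Tp: "\<forall>w\<in>W. (w, T w) \<in> L \<and> (\<forall>f. (w,f) \<in> L \<and> f \<noteq> T w \<longrightarrow> pw w (T w) f)"
    using worker_side[OF finW finF cardWF ow of] unfolding L_def by blast
  have swapL: "normal_form F W pf pw = prod.swap ` L" unfolding L_def by (rule nf_swap)
  obtain T' where T'st: "stable_matching F W pf pw T'"
    and T'p0: "\<forall>f\<in>F. (f, T' f) \<in> prod.swap ` L \<and> (\<forall>w. (f,w) \<in> prod.swap ` L \<and> w \<noteq> T' f \<longrightarrow> pf f (T' f) w)"
    using worker_side[OF finF finW cardWF[symmetric] of ow] unfolding swapL by blast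
  have T'p: "\<forall>f\<in>F. (T' f, f) \<in> L \<and> (\<forall>w. (w,f) \<in> L \<and> w \<noteq> T' f \<longrightarrow> pf f (T' f) w)"
    using T'p0 unfolding swap_mem by blast
  have Tin: "(w, T w) \<in> L" if "w \<in> W" for w using Tp that by blast
  have Ttop: "pw w (T w) f" if "w \<in> W" "(w,f) \<in> L" "f \<noteq> T w" for w f using Tp that by blast
  have T'in: "(T' f, f) \<in> L" if "f \<in> F" for f using T'p that by blast
  have T'top: "pf f (T' f) w" if "f \<in> F" "(w,f) \<in> L" "w \<noteq> T' f" for w f using T'p that by blast
  have LWF: "L \<subseteq> W \<times> F" unfolding L_def by (rule nf_subset)
  have G2: "\<And>w f. (w,f) \<in> L \<Longrightarrow> \<not> mutually_unattractive pw pf L w f"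
    unfolding L_def using nf_no_mu[OF finW finF] by blast
  have Tbij: "bij_betw T W F" using Tst unfolding stable_matching_def is_matching_def by blast
  have T'bij: "bij_betw T' F W" using T'st unfolding stable_matching_def is_matching_def by blast
  have TF: "T w \<in> F" if "w \<in> W" for w using Tbij that bij_betw_apply by fastforce
  have T'W: "T' f \<in> W" if "f \<in> F" for f using T'bij that bij_betw_apply by fastforce
  have P1: "pw (T' f) f2 f" if f: "f \<in> F" and in2: "(T' f, f2) \<in> L" and ne: "f2 \<noteq> f" for f f2
  proof -
    let ?w = "T' f"
    have wW: "?w \<in> W" using T'W f .
    have f2F: "f2 \<in> F" using in2 LWF by auto
    have o: "strict_order_on F (pw ?w)" using ow wW by blast
    have "\<not> pw ?w f f2"
    proof
      assume "pw ?w f f2"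
      then have "mutually_unattractive pw pf L ?w f2"
        unfolding mutually_unattractive_def using T'in[OF f] T'top[OF f] by blast
      then show False using G2 in2 by blast
    qed
    then show ?thesis using so_total[OF o f f2F] ne by blast
  qed
  have P2: "pf (T w) w2 w" if w: "w \<in> W" and in2: "(w2, T w) \<in> L" and ne: "w2 \<noteq> w" for w w2
  proof -
    let ?f = "T w"
    have fF: "?f \<in> F" using TF w .
    have w2W: "w2 \<in> W" using in2 LWF by auto
    have o: "strict_order_on W (pf ?f)" using of fF by blast
    have "\<not> pf ?f w w2"
    proof
      assume "pf ?f w w2"
      then have "mutually_unattractive pw pf L w2 ?f"
        unfolding mutually_unattractive_def using Tin[OF w] Ttop[OF w] by blast
      then show False using G2 in2 by blast
    qed
    then show ?thesis using so_total[OF o w w2W] ne by blast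
  qed
  have cw: "card {f. (w,f) \<in> L} = 1 \<longleftrightarrow> (\<forall>f. (w,f) \<in> L \<longrightarrow> f = T w)" if w: "w \<in> W" for w
  proof
    assume "card {f. (w,f) \<in> L} = 1"
    then obtain x where x: "{f. (w,f) \<in> L} = {x}" by (rule card_1_singletonE)
    have "T w \<in> {f. (w,f) \<in> L}" using Tin[OF w] by simp
    then have Tx: "T w = x" using x by simp
    show "\<forall>f. (w,f) \<in> L \<longrightarrow> f = T w"
    proof (intro allI impI)
      fix f assume "(w,f) \<in> L"
      then have "f \<in> {f. (w,f) \<in> L}" by simp
      then show "f = T w" using x Tx by simp
    qed
  next
    assume "\<forall>f. (w,f) \<in> L \<longrightarrow> f = T w"
    then have "{f. (w,f) \<in> L} = {T w}" using Tin[OF w] by blast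
    then show "card {f. (w,f) \<in> L} = 1" by simp
  qed
  have cf: "card {w. (w,f) \<in> L} = 1 \<longleftrightarrow> (\<forall>w. (w,f) \<in> L \<longrightarrow> w = T' f)" if f: "f \<in> F" for f
  proof
    assume "card {w. (w,f) \<in> L} = 1"
    then obtain x where x: "{w. (w,f) \<in> L} = {x}" by (rule card_1_singletonE)
    have "T' f \<in> {w. (w,f) \<in> L}" using T'in[OF f] by simp
    then have Tx: "T' f = x" using x by simp
    show "\<forall>w. (w,f) \<in> L \<longrightarrow> w = T' f"
    proof (intro allI impI)
      fix w assume "(w,f) \<in> L"
      then have "w \<in> {w. (w,f) \<in> L}" by simp
      then show "w = T' f" using x Tx by simp
    qed
  next
    assume "\<forall>w. (w,f) \<in> L \<longrightarrow> w = T' f"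
    then have "{w. (w,f) \<in> L} = {T' f}" using T'in[OF f] by blast
    then show "card {w. (w,f) \<in> L} = 1" by simp
  qed
  define C where "C = ((\<forall>w\<in>W. \<forall>f. (w,f) \<in> L \<longrightarrow> f = T w) \<and> (\<forall>f\<in>F. \<forall>w. (w,f) \<in> L \<longrightarrow> w = T' f))"
  have Ceq: "((\<forall>w\<in>W. card {f. (w, f) \<in> normal_form W F pw pf} = 1) \<and>
             (\<forall>f\<in>F. card {w. (w, f) \<in> normal_form W F pw pf} = 1)) = C"
    unfolding C_def L_def[symmetric] using cw cf by (simp add: Ball_def)
  have Mst: "stable_matching W F pw pf (inv_into F T')"
    unfolding stable_matching_def is_matching_def
  proof
    show "bij_betw (inv_into F T') W F" using bij_betw_inv_into[OF T'bij] .
    show "\<forall>w\<in>W. \<forall>f\<in>F. \<not> blocking_pair W F pw pf (inv_into F T') w f"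
    proof (intro ballI notI)
      fix w f assume w: "w\<in>W" and f: "f\<in>F" and bp: "blocking_pair W F pw pf (inv_into F T') w f"
      from bp obtain w' where w': "w'\<in>W" "inv_into F T' w' = f" "pf f w w'"
        and pref: "pw w f (inv_into F T' w)" unfolding blocking_pair_def by blast
      have surj: "T' ` F = W" using T'bij unfolding bij_betw_def by blast
      have "T' f = w'" using w' f_inv_into_f[of w' T' F] surj by blast
      moreover have "inv_into F T' w \<in> F" "T' (inv_into F T' w) = w"
        using inv_into_into[of w T' F] f_inv_into_f[of w T' F] surj w by blast+
      ultimately have "blocking_pair F W pf pw T' f w"
        unfolding blocking_pair_def using f w w' pref by blast
      then show False using T'st f w unfolding stable_matching_def by blast
    qed
  qed
  have a_C: "unique_stable_matching W F pw pf \<longleftrightarrow> C"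
  proof
    assume "unique_stable_matching W F pw pf"
    then obtain mu0 where mu0: "\<forall>mu'. stable_matching W F pw pf mu' \<longrightarrow> (\<forall>w\<in>W. mu' w = mu0 w)"
      unfolding unique_stable_matching_def by blast
    have eq: "T w = inv_into F T' w" if w: "w \<in> W" for w
    proof -
      have "T w = mu0 w" using mu0 Tst w by blast
      moreover have "inv_into F T' w = mu0 w" using mu0 Mst w by blast
      ultimately show ?thesis by simp
    qed
    have surj: "T' ` F = W" using T'bij unfolding bij_betw_def by blast
    have inj': "inj_on T' F" using T'bij unfolding bij_betw_def by blast
    show C unfolding C_def
    proof (intro conjI ballI allI impI)
      fix w f assume w: "w \<in> W" and inL: "(w,f) \<in> L"
      show "f = T w"
      proof (rule ccontr)
        assume ne: "f \<noteq> T w"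
        have "T' (T w) = w" using eq[OF w] f_inv_into_f[of w T' F] surj w by simp
        then have "pw w f (T w)" using P1[OF TF[OF w], of f] inL ne by simp
        moreover have "pw w (T w) f" using Ttop[OF w inL ne] .
        moreover have "f \<in> F" using inL LWF by auto
        ultimately show False using so_asym[of F "pw w" f "T w"] ow w TF[OF w] by blast
      qed
    next
      fix f w assume f: "f \<in> F" and inL: "(w,f) \<in> L"
      show "w = T' f"
      proof (rule ccontr)
        assume ne: "w \<noteq> T' f"
        have w0: "T' f \<in> W" using T'W f .
        have "T (T' f) = f" using eq[OF w0] inv_into_f_f[OF inj' f] by simp
        then have "pf f w (T' f)" using P2[OF w0, of w] inL ne by simp
        moreover have "pf f (T' f) w" using T'top[OF f inL ne] .
        moreover have "w \<in> W" using inL LWF by auto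
        ultimately show False using so_asym[of W "pf f" w "T' f"] of f w0 by blast
      qed
    qed
  next
    assume C
    have "\<forall>mu'. stable_matching W F pw pf mu' \<longrightarrow> (\<forall>w\<in>W. mu' w = T w)"
    proof (intro allI impI ballI)
      fix mu' w assume st: "stable_matching W F pw pf mu'" and w: "w \<in> W"
      have "(w, mu' w) \<in> L" unfolding L_def using stable_in_nf[OF ow of st w] .
      then show "mu' w = T w" using \<open>C\<close> w unfolding C_def by blast
    qed
    then show "unique_stable_matching W F pw pf"
      unfolding unique_stable_matching_def using Tst by blast
  qed
  have b_C: "nf_acyclic W F pw pf \<longleftrightarrow> C"
  proof
    assume ac: "nf_acyclic W F pw pf"
    show C
    proof (rule ccontr)
      assume nC: "\<not> C"
      have "\<exists>w0\<in>W. T' (T w0) \<noteq> w0"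
      proof (cases "\<forall>w\<in>W. \<forall>f. (w,f) \<in> L \<longrightarrow> f = T w")
        case False
        then obtain w f where w: "w \<in> W" and inL: "(w,f) \<in> L" and ne: "f \<noteq> T w" by blast
        have "T' (T w) \<noteq> w"
        proof
          assume e: "T' (T w) = w"
          have "pw w f (T w)" using P1[OF TF[OF w], of f] inL ne e by simp
          moreover have "pw w (T w) f" using Ttop[OF w inL ne] .
          moreover have "f \<in> F" using inL LWF by auto
          ultimately show False using so_asym[of F "pw w" f "T w"] ow w TF[OF w] by blast
        qed
        then show ?thesis using w by blast
      next
        case True
        then obtain f w where f: "f \<in> F" and inL: "(w,f) \<in> L" and ne: "w \<noteq> T' f"
          using nC unfolding C_def by blast
        have surjT: "T ` W = F" using Tbij unfolding bij_betw_def by blast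
        define w0 where "w0 = inv_into W T f"
        have w0W: "w0 \<in> W" and Tw0: "T w0 = f"
          unfolding w0_def using inv_into_into[of f T W] f_inv_into_f[of f T W] surjT f by blast+
        have "T' (T w0) \<noteq> w0"
        proof
          assume e: "T' (T w0) = w0"
          then have e': "T' f = w0" using Tw0 by simp
          have "pf f w w0" using P2[OF w0W, of w] inL ne e' Tw0 by simp
          moreover have "pf f w0 w" using T'top[OF f inL ne] e' by simp
          moreover have "w \<in> W" using inL LWF by auto
          ultimately show False using so_asym[of W "pf f" w w0] of f w0W by blast
        qed
        then show ?thesis using w0W by blast
      qed
      then obtain w0 where "w0 \<in> W" "T' (T w0) \<noteq> w0" by blast
      note cy = cycle_exists[where W=W and T=T and F=F and T'=T' and L=L and pw=pw and pf=pf, OF finW Tbij T'bij this Tp T'p]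
      have ac': "\<not> (\<exists>k::nat. \<exists>ws :: nat \<Rightarrow> 'w. \<exists>fs :: nat \<Rightarrow> 'f.
           2 \<le> k \<and> k \<le> card W \<and>
           inj_on ws {0..<k} \<and> inj_on fs {0..<k} \<and>
           ws ` {0..<k} \<subseteq> W \<and> fs ` {0..<k} \<subseteq> F \<and>
           (\<forall>j<k.
              (ws j, fs j) \<in> L \<and> (ws j, fs ((j + 1) mod k)) \<in> L \<and>
              pw (ws j) (fs ((j + 1) mod k)) (fs j) \<and>
              (ws ((j + k - 1) mod k), fs j) \<in> L \<and>
              pf (fs j) (ws j) (ws ((j + k - 1) mod k))))"
        using ac unfolding nf_acyclic_def Let_def L_def .
      show False using ac' cy by (rule notE)
    qed
  next
    assume C
    show "nf_acyclic W F pw pf"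
      unfolding nf_acyclic_def Let_def L_def[symmetric]
    proof
      assume "\<exists>(k::nat) ws fs. 2 \<le> k \<and> k \<le> card W \<and> inj_on ws {0..<k} \<and> inj_on fs {0..<k} \<and>
           ws ` {0..<k} \<subseteq> W \<and> fs ` {0..<k} \<subseteq> F \<and>
           (\<forall>j<k. (ws j, fs j) \<in> L \<and> (ws j, fs ((j + 1) mod k)) \<in> L \<and>
              pw (ws j) (fs ((j + 1) mod k)) (fs j) \<and>
              (ws ((j + k - 1) mod k), fs j) \<in> L \<and>
              pf (fs j) (ws j) (ws ((j + k - 1) mod k)))"
      then obtain k :: nat and ws :: "nat \<Rightarrow> 'w" and fs :: "nat \<Rightarrow> 'f" where all:
           "2 \<le> k \<and> k \<le> card W \<and> inj_on ws {0..<k} \<and> inj_on fs {0..<k} \<and>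
           ws ` {0..<k} \<subseteq> W \<and> fs ` {0..<k} \<subseteq> F \<and>
           (\<forall>j<k. (ws j, fs j) \<in> L \<and> (ws j, fs ((j + 1) mod k)) \<in> L \<and>
              pw (ws j) (fs ((j + 1) mod k)) (fs j) \<and>
              (ws ((j + k - 1) mod k), fs j) \<in> L \<and>
              pf (fs j) (ws j) (ws ((j + k - 1) mod k)))" by (elim exE)
      have k: "2 \<le> k" using all by (elim conjE)
      have img: "ws ` {0..<k} \<subseteq> W" "fs ` {0..<k} \<subseteq> F" using all by blast+
      have cyc: "\<forall>j<k. (ws j, fs j) \<in> L \<and> (ws j, fs ((j + 1) mod k)) \<in> L \<and>
              pw (ws j) (fs ((j + 1) mod k)) (fs j)" using all by blast
      have k0: "0 < k" using k by simp
      have w: "ws 0 \<in> W" and f: "fs 0 \<in> F" using img k0 by auto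
      have c0: "(ws 0, fs 0) \<in> L" "(ws 0, fs (1 mod k)) \<in> L" "pw (ws 0) (fs (1 mod k)) (fs 0)"
        using cyc k0 by auto
      have "fs 0 = T (ws 0)" "fs (1 mod k) = T (ws 0)" using \<open>C\<close> c0 w unfolding C_def by blast+
      then show False using c0(3) so_irrefl[of F "pw (ws 0)" "fs 0"] ow w f by auto
    qed
  qed
  show ?thesis using a_C b_C Ceq by blast
qed


end
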